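(* There is no SLCS formula $\varphi$ such that for every neighbourhood model $\mathcal M$ with underlying space $(X,\mathcal N)$: $(X,\mathcal N)$ is connected if and only if $\mathcal M,x\models\varphi$ for every $x\in X$. (For any neighbourhood model $\mathcal M$, the model $\mathcal M'$ consisting of two disjoint, mutually unconnected copies of $\mathcal M$ admits a path preserving bisimulation with $\mathcal M$ relating each point of $\mathcal M$ to both of its copies.)
   Context: A neighbourhood space $(X,\mathcal N)$ assigns to each $x\in X$ a filter $\mathcal N(x)$ on $X$ (closed under finite intersections and supersets, not containing $\emptyset$) such that $x\in N$ for all $N\in\mathcal N(x)$. Closure: $\mathcal C(A)=\{x\mid\forall N\in\mathcal N(x): A\cap N\neq\emptyset\}$. Subsets $U,V$ are semi-separated if $\mathcal C(U)\cap V=U\cap\mathcal C(V)=\emptyset$; a set is connected if it is not the union of two non-empty semi-separated sets; the space is connected if $X$ is. Continuity: $f$ continuous iff $f^{-1}[N]\in\mathcal N_1(x)$ for all $N\in\mathcal N_2(f(x))$. An index space $(I,\mathcal N_I,\le,0)$ is a connected neighbourhood space with a linear order with least element $0$. A neighbourhood model $\mathcal M=((X,\mathcal N),\mathcal I,V)$ has an index space $\mathcal I$ and a valuation $V:X\to\mathcal P(\mathsf P)$ for a fixed countable set $\mathsf P$ of atoms; a path is a continuous $p:I\to X$. SLCS formulas: $\varphi::=a\mid\top\mid\neg\varphi\mid\varphi\wedge\varphi\mid\mathcal N\varphi\mid\varphi\,\mathcal R\,\varphi\mid\varphi\,\mathcal P\,\varphi$ with $a\in\mathsf P$. Semantics: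 $\mathcal M,x\models a$ iff $a\in V(x)$; Booleans as usual; $\mathcal M,x\models\mathcal N\varphi$ iff $x\in\mathcal C(\{y\mid\mathcal M,y\models\varphi\})$; $\mathcal M,x\models\varphi\,\mathcal R\,\psi$ iff there are a path $p$ and $n$ with $p(n)=x$, $\mathcal M,p(0)\models\psi$ and $\mathcal M,p(i)\models\varphi$ for all $0<i\le n$; $\mathcal M,x\models\varphi\,\mathcal P\,\psi$ iff there are a path $p$ with $p(0)=x$ and $n$ with $\mathcal M,p(n)\models\psi$ and $\mathcal M,p(i)\models\varphi$ for all $0\le i<n$. Path preserving bisimulation: for models $\mathcal M_1,\mathcal M_2$ over the same index space with path sets $\mathcal P_1,\mathcal P_2$, a triple $(Z_{\mathcal N},Z_1,Z_2)$, $\emptyset\ne Z_{\mathcal N}\subseteq X_1\times X_2$, $Z_1\subseteq(\mathcal P_1\times I)\times(\mathcal P_2\times I)$, $Z_2\subseteq(\mathcal P_2\times I)\times(\mathcal P_1\times I)$, such that: (1) at each pair $x_1Z_{\mathcal N}x_2$: $V_1(x_1)=V_2(x_2)$; for every $N_2\in\mathcal N_2(x_2)$ there is $N_1\in\mathcal N_1(x_1)$ with every $y_1\in N_1$ related to some $y_2\in N_2$; and symmetrically for every $N_1\in\mathcal N_1(x_1)$; (2) if $x_1Z_{\mathcal N}x_2$, $p(0)=x_1$, $n\ne0$, there are $q$ with $q(0)=x_2$ and $m$ with $p(n)Z_{\mathcal N}q(m)$, $(p,n)Z_1(q,m)$; (3) if $x_1Z_{\mathcal N}x_2$, $p(n)=x_1$,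 $n\ne0$, there are $q,m$ with $q(m)=x_2$, $p(0)Z_{\mathcal N}q(0)$, $(p,n)Z_1(q,m)$; (4) if $(p,n)Z_1(q,m)$ and $0<k_q<m$, there is $0<k_p<n$ with $p(k_p)Z_{\mathcal N}q(k_q)$; (5) if $x_1Z_{\mathcal N}x_2$, $q(0)=x_2$, $m\ne0$, there are $p$ with $p(0)=x_1$ and $n$ with $p(n)Z_{\mathcal N}q(m)$, $(q,m)Z_2(p,n)$; (6) if $x_1Z_{\mathcal N}x_2$, $q(m)=x_2$, $m\neq0$, there are $p,n$ with $p(n)=x_1$, $p(0)Z_{\mathcal N}q(0)$, $(q,m)Z_2(p,n)$; (7) if $(q,m)Z_2(p,n)$ and $0<k_p<n$, there is $0<k_q<m$ with $p(k_p)Z_{\mathcal N}q(k_q)$. *)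

theory Defs
  imports Main "HOL-Library.Countable"
begin

definition nspace :: "'a set \<Rightarrow> ('a \<Rightarrow> 'a set set) \<Rightarrow> bool" where
  "nspace X N \<longleftrightarrow>
     (\<forall>x\<in>X. X \<in> N x
        \<and> {} \<notin> N x
        \<and> (\<forall>A\<in>N x. A \<subseteq> X \<and> x \<in> A)
        \<and> (\<forall>A\<in>N x. \<forall>B\<in>N x. A \<inter> B \<in> N x)
        \<and> (\<forall>A\<in>N x. \<forall>B. A \<subseteq> B \<and> B \<subseteq> X \<longrightarrow> B \<in> N x))"

definition nclosure :: "'a set \<Rightarrow> ('a \<Rightarrow> 'a set set) \<Rightarrow> 'a set \<Rightarrow> 'a set" where
  "nclosure X N A = {x \<in> X. \<forall>M\<in>N x. A \<inter> M \<noteq> {}}"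

definition semi_separated :: "'a set \<Rightarrow> ('a \<Rightarrow> 'a set set) \<Rightarrow> 'a set \<Rightarrow> 'a set \<Rightarrow> bool" where
  "semi_separated X N U V \<longleftrightarrow> nclosure X N U \<inter> V = {} \<and> U \<inter> nclosure X N V = {}"

definition nconnected_set :: "'a set \<Rightarrow> ('a \<Rightarrow> 'a set set) \<Rightarrow> 'a set \<Rightarrow> bool" where
  "nconnected_set X N S \<longleftrightarrow>
     \<not> (\<exists>U V. U \<noteq> {} \<and> V \<noteq> {} \<and> U \<union> V = S \<and> semi_separated X N U V)"

definition nconnected :: "'a set \<Rightarrow> ('a \<Rightarrow> 'a set set) \<Rightarrow> bool" where
  "nconnected X N \<longleftrightarrow> nconnected_set X N X"

definition ncontinuous ::
  "'a set \<Rightarrow> ('a \<Rightarrow> 'a set set) \<Rightarrow> 'b set \<Rightarrow> ('b \<Rightarrow> 'b set set) \<Rightarrow> ('a \<Rightarrow> 'b) \<Rightarrow> bool" where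
  "ncontinuous X1 N1 X2 N2 f \<longleftrightarrow>
     (\<forall>x\<in>X1. f x \<in> X2) \<and>
     (\<forall>x\<in>X1. \<forall>M\<in>N2 (f x). {y \<in> X1. f y \<in> M} \<in> N1 x)"

record 'i ispace =
  ipts :: "'i set"
  inbhd :: "'i \<Rightarrow> 'i set set"
  ile :: "'i \<Rightarrow> 'i \<Rightarrow> bool"
  izero :: 'i

definition index_space :: "'i ispace \<Rightarrow> bool" where
  "index_space \<I> \<longleftrightarrow>
     nspace (ipts \<I>) (inbhd \<I>) \<and> nconnected (ipts \<I>) (inbhd \<I>) \<and>
     (\<forall>i\<in>ipts \<I>. ile \<I> i i) \<and>
     (\<forall>i\<in>ipts \<I>. \<forall>j\<in>ipts \<I>. ile \<I> i j \<and> ile \<I> j i \<longrightarrow> i = j) \<and>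
     (\<forall>i\<in>ipts \<I>. \<forall>j\<in>ipts \<I>. \<forall>k\<in>ipts \<I>. ile \<I> i j \<and> ile \<I> j k \<longrightarrow> ile \<I> i k) \<and>
     (\<forall>i\<in>ipts \<I>. \<forall>j\<in>ipts \<I>. ile \<I> i j \<or> ile \<I> j i) \<and>
     izero \<I> \<in> ipts \<I> \<and> (\<forall>i\<in>ipts \<I>. ile \<I> (izero \<I>) i)"

definition ilt :: "'i ispace \<Rightarrow> 'i \<Rightarrow> 'i \<Rightarrow> bool" where
  "ilt \<I> i j \<longleftrightarrow> ile \<I> i j \<and> i \<noteq> j"

record ('a, 'i, 'p) nmodel =
  pts :: "'a set"
  nbhd :: "'a \<Rightarrow> 'a set set"
  idx :: "'i ispace"
  val :: "'a \<Rightarrow> 'p set"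

definition nmodel :: "('a, 'i, 'p) nmodel \<Rightarrow> bool" where
  "nmodel M \<longleftrightarrow> nspace (pts M) (nbhd M) \<and> index_space (idx M)"

definition is_path :: "('a, 'i, 'p) nmodel \<Rightarrow> ('i \<Rightarrow> 'a) \<Rightarrow> bool" where
  "is_path M p \<longleftrightarrow> ncontinuous (ipts (idx M)) (inbhd (idx M)) (pts M) (nbhd M) p"

datatype 'p slcs =
    Atom 'p
  | Top
  | Neg "'p slcs"
  | Conj "'p slcs" "'p slcs"
  | Near "'p slcs"
  | Reach "'p slcs" "'p slcs"
  | Pass "'p slcs" "'p slcs"

primrec sat :: "('a, 'i, 'p) nmodel \<Rightarrow> 'a \<Rightarrow> 'p slcs \<Rightarrow> bool" where
  "sat M x (Atom a) \<longleftrightarrow> a \<in> val M x"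
| "sat M x Top \<longleftrightarrow> True"
| "sat M x (Neg \<phi>) \<longleftrightarrow> \<not> sat M x \<phi>"
| "sat M x (Conj \<phi> \<psi>) \<longleftrightarrow> sat M x \<phi> \<and> sat M x \<psi>"
| "sat M x (Near \<phi>) \<longleftrightarrow> x \<in> nclosure (pts M) (nbhd M) {y \<in> pts M. sat M y \<phi>}"
| "sat M x (Reach \<phi> \<psi>) \<longleftrightarrow>
     (\<exists>p n. is_path M p \<and> n \<in> ipts (idx M) \<and> p n = x \<and>
        sat M (p (izero (idx M))) \<psi> \<and>
        (\<forall>i\<in>ipts (idx M). ilt (idx M) (izero (idx M)) i \<and> ile (idx M) i n \<longrightarrow> sat M (p i) \<phi>))"
| "sat M x (Pass \<phi> \<psi>) \<longleftrightarrow>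
     (\<exists>p n. is_path M p \<and> n \<in> ipts (idx M) \<and> p (izero (idx M)) = x \<and>
        sat M (p n) \<psi> \<and>
        (\<forall>i\<in>ipts (idx M). ile (idx M) (izero (idx M)) i \<and> ilt (idx M) i n \<longrightarrow> sat M (p i) \<phi>))"

definition pp_bisim ::
  "('a, 'i, 'p) nmodel \<Rightarrow> ('b, 'i, 'p) nmodel \<Rightarrow> ('a \<times> 'b) set
   \<Rightarrow> ((('i \<Rightarrow> 'a) \<times> 'i) \<times> (('i \<Rightarrow> 'b) \<times> 'i)) set
   \<Rightarrow> ((('i \<Rightarrow> 'b) \<times> 'i) \<times> (('i \<Rightarrow> 'a) \<times> 'i)) set \<Rightarrow> bool" where
  "pp_bisim M1 M2 ZN Z1 Z2 \<longleftrightarrow>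
    (let I = ipts (idx M1); z = izero (idx M1); lt = ilt (idx M1) in
     idx M1 = idx M2 \<and>
     ZN \<noteq> {} \<and> ZN \<subseteq> pts M1 \<times> pts M2 \<and>
     Z1 \<subseteq> ({p. is_path M1 p} \<times> I) \<times> ({q. is_path M2 q} \<times> I) \<and>
     Z2 \<subseteq> ({q. is_path M2 q} \<times> I) \<times> ({p. is_path M1 p} \<times> I) \<and>
     \<comment> \<open>(1)\<close>
     (\<forall>(x1, x2)\<in>ZN. val M1 x1 = val M2 x2 \<and>
        (\<forall>N2\<in>nbhd M2 x2. \<exists>N1\<in>nbhd M1 x1. \<forall>y1\<in>N1. \<exists>y2\<in>N2. (y1, y2) \<in> ZN) \<and>
        (\<forall>N1\<in>nbhd M1 x1. \<exists>N2\<in>nbhd M2 x2. \<forall>y2\<in>N2. \<exists>y1\<in>N1. (y1, y2) \<in> ZN)) \<and>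
     \<comment> \<open>(2)\<close>
     (\<forall>(x1, x2)\<in>ZN. \<forall>p n. is_path M1 p \<and> n \<in> I \<and> p z = x1 \<and> n \<noteq> z \<longrightarrow>
        (\<exists>q m. is_path M2 q \<and> m \<in> I \<and> q z = x2 \<and> (p n, q m) \<in> ZN \<and> ((p, n), (q, m)) \<in> Z1)) \<and>
     \<comment> \<open>(3)\<close>
     (\<forall>(x1, x2)\<in>ZN. \<forall>p n. is_path M1 p \<and> n \<in> I \<and> p n = x1 \<and> n \<noteq> z \<longrightarrow>
        (\<exists>q m. is_path M2 q \<and> m \<in> I \<and> q m = x2 \<and> (p z, q z) \<in> ZN \<and> ((p, n), (q, m)) \<in> Z1)) \<and>
     \<comment> \<open>(4)\<close>
     (\<forall>((p, n), (q, m))\<in>Z1. \<forall>kq\<in>I. lt z kq \<and> lt kq m \<longrightarrow>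
        (\<exists>kp\<in>I. lt z kp \<and> lt kp n \<and> (p kp, q kq) \<in> ZN)) \<and>
     \<comment> \<open>(5)\<close>
     (\<forall>(x1, x2)\<in>ZN. \<forall>q m. is_path M2 q \<and> m \<in> I \<and> q z = x2 \<and> m \<noteq> z \<longrightarrow>
        (\<exists>p n. is_path M1 p \<and> n \<in> I \<and> p z = x1 \<and> (p n, q m) \<in> ZN \<and> ((q, m), (p, n)) \<in> Z2)) \<and>
     \<comment> \<open>(6)\<close>
     (\<forall>(x1, x2)\<in>ZN. \<forall>q m. is_path M2 q \<and> m \<in> I \<and> q m = x2 \<and> m \<noteq> z \<longrightarrow>
        (\<exists>p n. is_path M1 p \<and> n \<in> I \<and> p n = x1 \<and> (p z, q z) \<in> ZN \<and> ((q, m), (p, n)) \<in> Z2)) \<and>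
     \<comment> \<open>(7)\<close>
     (\<forall>((q, m), (p, n))\<in>Z2. \<forall>kp\<in>I. lt z kp \<and> lt kp n \<longrightarrow>
        (\<exists>kq\<in>I. lt z kq \<and> lt kq m \<and> (p kp, q kq) \<in> ZN)))"

definition two_copies :: "('a, 'i, 'p) nmodel \<Rightarrow> ('a \<times> bool, 'i, 'p) nmodel" where
  "two_copies M =
    \<lparr> pts = pts M \<times> UNIV,
      nbhd = (\<lambda>(x, b). {A. A \<subseteq> pts M \<times> UNIV \<and> (\<exists>N\<in>nbhd M x. N \<times> {b} \<subseteq> A)}),
      idx = idx M,
      val = (\<lambda>(x, b). val M x) \<rparr>"

end

theory Submission
  imports Defs
begin

lemma nspace_D: assumes "nspace X N" "x \<in> X"
  shows "X \<in> N x \<and> {} \<notin> N x \<and> (\<forall>A\<in>N x. A \<subseteq> X \<and> x \<in> A) \<and> (\<forall>A\<in>N x. \<forall>B\<in>N x. A \<inter> B \<in> N x)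
     \<and> (\<forall>A\<in>N x. \<forall>B. A \<subseteq> B \<and> B \<subseteq> X \<longrightarrow> B \<in> N x)"
  using assms unfolding nspace_def by (rule bspec)
lemma nspace_sup: assumes "nspace X N" "x \<in> X" "A \<in> N x" "A \<subseteq> B" "B \<subseteq> X" shows "B \<in> N x"
  using nspace_D[OF assms(1,2)] assms(3-5) by blast
lemma nspace_sub: assumes "nspace X N" "x \<in> X" "A \<in> N x" shows "A \<subseteq> X" "x \<in> A"
  using nspace_D[OF assms(1,2)] assms(3) by blast+
lemma nspace_int: assumes "nspace X N" "x \<in> X" "A \<in> N x" "B \<in> N x" shows "A \<inter> B \<in> N x"
  using nspace_D[OF assms(1,2)] assms(3,4) by blast
lemma nspace_top: assumes "nspace X N" "x \<in> X" shows "X \<in> N x" "{} \<notin> N x"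
  using nspace_D[OF assms(1,2)] by blast+

lemma nmodel_D: "nmodel M \<Longrightarrow> nspace (pts M) (nbhd M) \<and> nspace (ipts (idx M)) (inbhd (idx M))
   \<and> izero (idx M) \<in> ipts (idx M)"
  unfolding nmodel_def index_space_def by blast

lemma two_copies_simps[simp]:
  "pts (two_copies M) = pts M \<times> UNIV"
  "nbhd (two_copies M) (x, b) = {A. A \<subseteq> pts M \<times> UNIV \<and> (\<exists>N\<in>nbhd M x. N \<times> {b} \<subseteq> A)}"
  "idx (two_copies M) = idx M"
  "val (two_copies M) (x, b) = val M x"
  by (simp_all add: two_copies_def)

lemma nspace_two: assumes ns: "nspace X N"
  shows "nspace (X \<times> (UNIV::bool set)) (\<lambda>(x, b). {A. A \<subseteq> X \<times> UNIV \<and> (\<exists>N'\<in>N x. N' \<times> {b} \<subseteq> A)})"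
  unfolding nspace_def
proof (intro ballI)
  fix z assume z: "z \<in> X \<times> (UNIV::bool set)"
  obtain x b where zx: "z = (x, b)" by fastforce
  have x: "x \<in> X" using z zx by simp
  note D = nspace_sub[OF ns x] nspace_top[OF ns x] nspace_int[OF ns x]
  let ?F = "{A. A \<subseteq> X \<times> UNIV \<and> (\<exists>N'\<in>N x. N' \<times> {b} \<subseteq> A)}"
  have 1: "X \<times> UNIV \<in> ?F"
  proof -
    have "X \<times> {b} \<subseteq> X \<times> UNIV" by auto
    then show ?thesis using D(3) by blast
  qed
  have 2: "{} \<notin> ?F"
  proof
    assume "{} \<in> ?F"
    then obtain N' where "N' \<in> N x" "N' \<times> {b} \<subseteq> {}" by blast
    then show False using D(2)[of N'] by blast
  qed
  have 3: "\<forall>A\<in>?F. A \<subseteq> X \<times> UNIV \<and> (x, b) \<in> A"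
  proof
    fix A assume "A \<in> ?F"
    then obtain N' where "A \<subseteq> X \<times> UNIV" "N' \<in> N x" "N' \<times> {b} \<subseteq> A" by blast
    then show "A \<subseteq> X \<times> UNIV \<and> (x, b) \<in> A" using D(2)[of N'] by blast
  qed
  have 4: "\<forall>A\<in>?F. \<forall>B\<in>?F. A \<inter> B \<in> ?F"
  proof (intro ballI)
    fix A B assume "A \<in> ?F" "B \<in> ?F"
    then obtain N1 N2 where "A \<subseteq> X \<times> UNIV" "N1 \<in> N x" "N1 \<times> {b} \<subseteq> A"
       "B \<subseteq> X \<times> UNIV" "N2 \<in> N x" "N2 \<times> {b} \<subseteq> B" by blast
    moreover have "N1 \<inter> N2 \<in> N x" using D(5) calculation by blast
    moreover have "(N1 \<inter> N2) \<times> {b} \<subseteq> A \<inter> B" using calculation by auto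
    moreover have "A \<inter> B \<subseteq> X \<times> UNIV" using calculation by auto
    ultimately show "A \<inter> B \<in> ?F" by (simp only: mem_Collect_eq) blast
  qed
  have 5: "\<forall>A\<in>?F. \<forall>B. A \<subseteq> B \<and> B \<subseteq> X \<times> UNIV \<longrightarrow> B \<in> ?F"
  proof (intro ballI allI impI)
    fix A B assume "A \<in> ?F" "A \<subseteq> B \<and> B \<subseteq> X \<times> UNIV"
    then obtain N' where "N' \<in> N x" "N' \<times> {b} \<subseteq> A" "A \<subseteq> B" "B \<subseteq> X \<times> UNIV" by blast
    then show "B \<in> ?F" by (simp only: mem_Collect_eq) (intro conjI bexI[of _ N'], auto)
  qed
  show "X \<times> UNIV \<in> (case z of (x, b) \<Rightarrow> {A. A \<subseteq> X \<times> UNIV \<and> (\<exists>N'\<in>N x. N' \<times> {b} \<subseteq> A)}) \<and>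
         {} \<notin> (case z of (x, b) \<Rightarrow> {A. A \<subseteq> X \<times> UNIV \<and> (\<exists>N'\<in>N x. N' \<times> {b} \<subseteq> A)}) \<and>
         (\<forall>A\<in>(case z of (x, b) \<Rightarrow> {A. A \<subseteq> X \<times> UNIV \<and> (\<exists>N'\<in>N x. N' \<times> {b} \<subseteq> A)}). A \<subseteq> X \<times> UNIV \<and> z \<in> A) \<and>
         (\<forall>A\<in>(case z of (x, b) \<Rightarrow> {A. A \<subseteq> X \<times> UNIV \<and> (\<exists>N'\<in>N x. N' \<times> {b} \<subseteq> A)}).
             \<forall>B\<in>(case z of (x, b) \<Rightarrow> {A. A \<subseteq> X \<times> UNIV \<and> (\<exists>N'\<in>N x. N' \<times> {b} \<subseteq> A)}).
                A \<inter> B \<in> (case z of (x, b) \<Rightarrow> {A. A \<subseteq> X \<times> UNIV \<and> (\<exists>N'\<in>N x. N' \<times> {b} \<subseteq> A)})) \<and>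
         (\<forall>A\<in>(case z of (x, b) \<Rightarrow> {A. A \<subseteq> X \<times> UNIV \<and> (\<exists>N'\<in>N x. N' \<times> {b} \<subseteq> A)}).
             \<forall>B. A \<subseteq> B \<and> B \<subseteq> X \<times> UNIV \<longrightarrow>
                B \<in> (case z of (x, b) \<Rightarrow> {A. A \<subseteq> X \<times> UNIV \<and> (\<exists>N'\<in>N x. N' \<times> {b} \<subseteq> A)}))"
    unfolding zx prod.case using 1 2 3 4 5 by (intro conjI)
qed

lemma nmodel_two: "nmodel M \<Longrightarrow> nmodel (two_copies M)"
  unfolding nmodel_def using nspace_two[of "pts M" "nbhd M"] by (simp add: two_copies_def)

lemma path_lift:
  assumes "nmodel M" "is_path M p"
  shows "is_path (two_copies M) (\<lambda>i. (p i, b))"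
  unfolding is_path_def ncontinuous_def
proof (intro conjI ballI)
  fix i assume i: "i \<in> ipts (idx (two_copies M))"
  then show "(p i, b) \<in> pts (two_copies M)"
    using assms(2) by (auto simp: is_path_def ncontinuous_def)
next
  fix i A assume i: "i \<in> ipts (idx (two_copies M))"
    and A: "A \<in> nbhd (two_copies M) (p i, b)"
  then obtain N where N: "N \<in> nbhd M (p i)" "N \<times> {b} \<subseteq> A" by auto
  have i': "i \<in> ipts (idx M)" using i by simp
  have S: "{y \<in> ipts (idx M). p y \<in> N} \<in> inbhd (idx M) i"
    using assms(2) i' N(1) unfolding is_path_def ncontinuous_def by blast
  have ns: "nspace (ipts (idx M)) (inbhd (idx M))"
    using nmodel_D[OF assms(1)] by blast
  have "{y \<in> ipts (idx M). p y \<in> N} \<subseteq> {y \<in> ipts (idx M). (p y, b) \<in> A}" using N(2) by auto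
  then have "{y \<in> ipts (idx M). (p y, b) \<in> A} \<in> inbhd (idx M) i"
    using nspace_sup[OF ns i' S] by blast
  then show "{y \<in> ipts (idx (two_copies M)). (p y, b) \<in> A} \<in> inbhd (idx (two_copies M)) i" by simp
qed

lemma path_in: "is_path M p \<Longrightarrow> i \<in> ipts (idx M) \<Longrightarrow> p i \<in> pts M"
  unfolding is_path_def ncontinuous_def by blast

lemma path_proj:
  assumes "nmodel M" "is_path (two_copies M) q"
  shows "is_path M (\<lambda>i. fst (q i))"
  unfolding is_path_def ncontinuous_def
proof (intro conjI ballI)
  fix i assume i: "i \<in> ipts (idx M)"
  then show "fst (q i) \<in> pts M"
    using path_in[OF assms(2), of i] by (auto simp: mem_Times_iff)
next
  fix i N assume i: "i \<in> ipts (idx M)" and N: "N \<in> nbhd M (fst (q i))"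
  obtain x b where qi: "q i = (x, b)" by fastforce
  have ns: "nspace (pts M) (nbhd M)" using nmodel_D[OF assms(1)] by blast
  have x: "x \<in> pts M" using path_in[OF assms(2), of i] i qi by simp
  have "N \<subseteq> pts M" using nspace_sub(1)[OF ns x] N qi by simp
  then have "N \<times> UNIV \<in> nbhd (two_copies M) (q i)" using N qi by auto
  then have "{y \<in> ipts (idx (two_copies M)). q y \<in> N \<times> UNIV} \<in> inbhd (idx (two_copies M)) i"
    using assms(2) i unfolding is_path_def ncontinuous_def by simp
  moreover have "{y \<in> ipts (idx (two_copies M)). q y \<in> N \<times> UNIV} = {y \<in> ipts (idx M). fst (q y) \<in> N}"
    by (auto simp: mem_Times_iff)
  ultimately show "{y \<in> ipts (idx M). fst (q y) \<in> N} \<in> inbhd (idx M) i" by simp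
qed

lemma bisim_two:
  assumes M: "nmodel M" "pts M \<noteq> {}"
  shows "pp_bisim M (two_copies M) {(x, (x, b)) | x b. x \<in> pts M}
     {((p, n), ((\<lambda>i. (p i, b)), n)) | p n b. is_path M p \<and> n \<in> ipts (idx M)}
     {((q, m), ((\<lambda>i. fst (q i)), m)) | q m. is_path (two_copies M) q \<and> m \<in> ipts (idx M)}"
proof -
  have ns: "nspace (pts M) (nbhd M)" using nmodel_D[OF M(1)] by blast
  have z0: "izero (idx M) \<in> ipts (idx M)" using nmodel_D[OF M(1)] by blast
  have sub: "\<And>x N. x \<in> pts M \<Longrightarrow> N \<in> nbhd M x \<Longrightarrow> N \<subseteq> pts M" using nspace_sub(1)[OF ns] by blast
  note L = path_lift[OF M(1)] and P = path_proj[OF M(1)] and I = path_in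
  have I2: "\<And>q i. is_path (two_copies M) q \<Longrightarrow> i \<in> ipts (idx M) \<Longrightarrow> q i = (fst (q i), snd (q i)) \<and> fst (q i) \<in> pts M"
  proof -
    fix q i assume "is_path (two_copies M) q" "i \<in> ipts (idx M)"
    then have "q i \<in> pts (two_copies M)" using I[of "two_copies M" q i] by simp
    then show "q i = (fst (q i), snd (q i)) \<and> fst (q i) \<in> pts M" by (simp add: mem_Times_iff)
  qed
  define ZN where "ZN = {(x, (x, b::bool)) | x b. x \<in> pts M}"
  have ZN: "\<And>x y. (x, y) \<in> ZN \<longleftrightarrow> x \<in> pts M \<and> fst y = x" unfolding ZN_def by force
  define Z1 where "Z1 = {((p, n), ((\<lambda>i. (p i, b::bool)), n)) | p n b. is_path M p \<and> n \<in> ipts (idx M)}"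
  define Z2 where "Z2 = {((q, m), ((\<lambda>i. fst (q i)), m)) | q m. is_path (two_copies M) q \<and> m \<in> ipts (idx M)}"
  have Z1I: "\<And>p n b. is_path M p \<Longrightarrow> n \<in> ipts (idx M) \<Longrightarrow> ((p, n), ((\<lambda>i. (p i, b)), n)) \<in> Z1"
    unfolding Z1_def by blast
  have Z2I: "\<And>q m. is_path (two_copies M) q \<Longrightarrow> m \<in> ipts (idx M) \<Longrightarrow> ((q, m), ((\<lambda>i. fst (q i)), m)) \<in> Z2"
    unfolding Z2_def by blast
  have c1a: "\<And>x b N2. x\<in>pts M \<Longrightarrow> N2\<in>nbhd (two_copies M) (x,b) \<Longrightarrow> \<exists>N1\<in>nbhd M x. \<forall>y1\<in>N1. \<exists>y2\<in>N2. (y1,y2)\<in>ZN"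
  proof -
    fix x b N2 assume x: "x \<in> pts M" and N2: "N2 \<in> nbhd (two_copies M) (x, b)"
    then obtain N where N: "N \<in> nbhd M x" "N \<times> {b} \<subseteq> N2" by auto
    show "\<exists>N1\<in>nbhd M x. \<forall>y1\<in>N1. \<exists>y2\<in>N2. (y1,y2)\<in>ZN"
    proof (intro bexI[of _ N] ballI)
      fix y assume "y \<in> N"
      then show "\<exists>y2\<in>N2. (y,y2)\<in>ZN" using N sub[OF x N(1)] by (intro bexI[of _ "(y,b)"]) (auto simp: ZN)
    qed (rule N(1))
  qed
  have c1b: "\<And>x b N1. x\<in>pts M \<Longrightarrow> N1\<in>nbhd M x \<Longrightarrow> \<exists>N2\<in>nbhd (two_copies M) (x,b). \<forall>y2\<in>N2. \<exists>y1\<in>N1. (y1,y2)\<in>ZN"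
  proof -
    fix x b N1 assume x: "x \<in> pts M" and N1: "N1 \<in> nbhd M x"
    have "N1 \<times> {b} \<in> nbhd (two_copies M) (x, b)" using sub[OF x N1] N1 by auto
    then show "\<exists>N2\<in>nbhd (two_copies M) (x, b). \<forall>y2\<in>N2. \<exists>y1\<in>N1. (y1,y2)\<in>ZN"
    proof (rule bexI[rotated], intro ballI)
      fix y2 assume "y2 \<in> N1 \<times> {b}"
      then show "\<exists>y1\<in>N1. (y1,y2)\<in>ZN" using sub[OF x N1] by (intro bexI[of _ "fst y2"]) (auto simp: ZN)
    qed
  qed
  have zn: "\<And>z. z \<in> ZN \<Longrightarrow> \<exists>x b. z = (x, (x, b)) \<and> x \<in> pts M" unfolding ZN_def by blast
  have "pp_bisim M (two_copies M) ZN Z1 Z2"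
    unfolding pp_bisim_def Let_def two_copies_simps(3)
  proof (intro conjI)
    show "ZN \<noteq> {}" using M(2) unfolding ZN_def by auto
    show "ZN \<subseteq> pts M \<times> pts (two_copies M)" unfolding ZN_def by auto
    show "Z1 \<subseteq> ({p. is_path M p} \<times> ipts (idx M)) \<times> ({q. is_path (two_copies M) q} \<times> ipts (idx M))"
    proof
      fix w assume "w \<in> Z1"
      then obtain p n b where "w = ((p,n),((\<lambda>i. (p i, b)),n))" "is_path M p" "n \<in> ipts (idx M)"
        unfolding Z1_def by blast
      then show "w \<in> ({p. is_path M p} \<times> ipts (idx M)) \<times> ({q. is_path (two_copies M) q} \<times> ipts (idx M))"
        using L[of p b] by simp
    qed
    show "Z2 \<subseteq> ({q. is_path (two_copies M) q} \<times> ipts (idx M)) \<times> ({p. is_path M p} \<times> ipts (idx M))"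
    proof
      fix w assume "w \<in> Z2"
      then obtain q m where "w = ((q,m),((\<lambda>i. fst (q i)),m))" "is_path (two_copies M) q" "m \<in> ipts (idx M)"
        unfolding Z2_def by blast
      then show "w \<in> ({q. is_path (two_copies M) q} \<times> ipts (idx M)) \<times> ({p. is_path M p} \<times> ipts (idx M))"
        using P[of q] by simp
    qed
    show "\<forall>(x1, x2)\<in>ZN. val M x1 = val (two_copies M) x2 \<and>
        (\<forall>N2\<in>nbhd (two_copies M) x2. \<exists>N1\<in>nbhd M x1. \<forall>y1\<in>N1. \<exists>y2\<in>N2. (y1, y2) \<in> ZN) \<and>
        (\<forall>N1\<in>nbhd M x1. \<exists>N2\<in>nbhd (two_copies M) x2. \<forall>y2\<in>N2. \<exists>y1\<in>N1. (y1, y2) \<in> ZN)"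
    proof (rule ballI)
      fix z assume "z \<in> ZN"
      then obtain x b where z: "z = (x, (x, b))" "x \<in> pts M" using zn by blast
      show "case z of (x1, x2) \<Rightarrow> val M x1 = val (two_copies M) x2 \<and>
        (\<forall>N2\<in>nbhd (two_copies M) x2. \<exists>N1\<in>nbhd M x1. \<forall>y1\<in>N1. \<exists>y2\<in>N2. (y1, y2) \<in> ZN) \<and>
        (\<forall>N1\<in>nbhd M x1. \<exists>N2\<in>nbhd (two_copies M) x2. \<forall>y2\<in>N2. \<exists>y1\<in>N1. (y1, y2) \<in> ZN)"
        unfolding z(1) prod.case
        apply (intro conjI ballI)
          apply (simp add: two_copies_def)
         apply (erule c1a[OF z(2)])
        apply (erule c1b[OF z(2)])
        done
    qed
    show "\<forall>(x1, x2)\<in>ZN. \<forall>p n. is_path M p \<and> n \<in> ipts (idx M) \<and> p (izero (idx M)) = x1 \<and> n \<noteq> izero (idx M) \<longrightarrow>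
        (\<exists>q m. is_path (two_copies M) q \<and> m \<in> ipts (idx M) \<and> q (izero (idx M)) = x2 \<and> (p n, q m) \<in> ZN \<and>
           ((p, n), (q, m)) \<in> Z1)"
    proof (rule ballI)
      fix z assume "z \<in> ZN"
      then obtain x b where z: "z = (x, (x, b))" "x \<in> pts M" using zn by blast
      show "case z of (x1, x2) \<Rightarrow> \<forall>p n. is_path M p \<and> n \<in> ipts (idx M) \<and> p (izero (idx M)) = x1 \<and> n \<noteq> izero (idx M) \<longrightarrow>
        (\<exists>q m. is_path (two_copies M) q \<and> m \<in> ipts (idx M) \<and> q (izero (idx M)) = x2 \<and> (p n, q m) \<in> ZN \<and>
           ((p, n), (q, m)) \<in> Z1)"
        unfolding z(1) prod.case
      proof (intro allI impI)
        fix p n assume h: "is_path M p \<and> n \<in> ipts (idx M) \<and> p (izero (idx M)) = x \<and> n \<noteq> izero (idx M)"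
        show "\<exists>q m. is_path (two_copies M) q \<and> m \<in> ipts (idx M) \<and> q (izero (idx M)) = (x, b) \<and> (p n, q m) \<in> ZN \<and>
           ((p, n), (q, m)) \<in> Z1"
          apply (rule exI[of _ "\<lambda>i. (p i, b)"], rule exI[of _ n])
          using h L[of p b] I[of M p n] by (auto simp: ZN intro: Z1I)
      qed
    qed
    show "\<forall>(x1, x2)\<in>ZN. \<forall>p n. is_path M p \<and> n \<in> ipts (idx M) \<and> p n = x1 \<and> n \<noteq> izero (idx M) \<longrightarrow>
        (\<exists>q m. is_path (two_copies M) q \<and> m \<in> ipts (idx M) \<and> q m = x2 \<and> (p (izero (idx M)), q (izero (idx M))) \<in> ZN \<and>
           ((p, n), (q, m)) \<in> Z1)"
    proof (rule ballI)
      fix z assume "z \<in> ZN"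
      then obtain x b where z: "z = (x, (x, b))" "x \<in> pts M" using zn by blast
      show "case z of (x1, x2) \<Rightarrow> \<forall>p n. is_path M p \<and> n \<in> ipts (idx M) \<and> p n = x1 \<and> n \<noteq> izero (idx M) \<longrightarrow>
        (\<exists>q m. is_path (two_copies M) q \<and> m \<in> ipts (idx M) \<and> q m = x2 \<and> (p (izero (idx M)), q (izero (idx M))) \<in> ZN \<and>
           ((p, n), (q, m)) \<in> Z1)"
        unfolding z(1) prod.case
      proof (intro allI impI)
        fix p n assume h: "is_path M p \<and> n \<in> ipts (idx M) \<and> p n = x \<and> n \<noteq> izero (idx M)"
        show "\<exists>q m. is_path (two_copies M) q \<and> m \<in> ipts (idx M) \<and> q m = (x, b) \<and> (p (izero (idx M)), q (izero (idx M))) \<in> ZN \<and>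
           ((p, n), (q, m)) \<in> Z1"
          apply (rule exI[of _ "\<lambda>i. (p i, b)"], rule exI[of _ n])
          using h L[of p b] I[of M p "izero (idx M)"] z0 by (auto simp: ZN intro: Z1I)
      qed
    qed
    show "\<forall>((p, n), (q, m))\<in>Z1. \<forall>kq\<in>ipts (idx M). ilt (idx M) (izero (idx M)) kq \<and> ilt (idx M) kq m \<longrightarrow>
        (\<exists>kp\<in>ipts (idx M). ilt (idx M) (izero (idx M)) kp \<and> ilt (idx M) kp n \<and> (p kp, q kq) \<in> ZN)"
    proof -
      have key: "\<And>p b k. is_path M p \<Longrightarrow> k \<in> ipts (idx M) \<Longrightarrow> (p k, (p k, b)) \<in> ZN"
        using path_in ZN by fastforce
      show ?thesis unfolding Z1_def using key by auto
    qed
  show "\<forall>(x1, x2)\<in>ZN. \<forall>q m. is_path (two_copies M) q \<and> m \<in> ipts (idx M) \<and> q (izero (idx M)) = x2 \<and> m \<noteq> izero (idx M) \<longrightarrow>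
        (\<exists>p n. is_path M p \<and> n \<in> ipts (idx M) \<and> p (izero (idx M)) = x1 \<and> (p n, q m) \<in> ZN \<and>
          ((q, m), (p, n)) \<in> Z2)"
    proof (rule ballI)
      fix z assume "z \<in> ZN"
      then obtain x b where z: "z = (x, (x, b))" "x \<in> pts M" using zn by blast
      show "case z of (x1, x2) \<Rightarrow> \<forall>q m. is_path (two_copies M) q \<and> m \<in> ipts (idx M) \<and> q (izero (idx M)) = x2 \<and> m \<noteq> izero (idx M) \<longrightarrow>
        (\<exists>p n. is_path M p \<and> n \<in> ipts (idx M) \<and> p (izero (idx M)) = x1 \<and> (p n, q m) \<in> ZN \<and>
          ((q, m), (p, n)) \<in> Z2)"
        unfolding z(1) prod.case
      proof (intro allI impI)
        fix q m assume h: "is_path (two_copies M) q \<and> m \<in> ipts (idx M) \<and> q (izero (idx M)) = (x, b) \<and> m \<noteq> izero (idx M)"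
        show "\<exists>p n. is_path M p \<and> n \<in> ipts (idx M) \<and> p (izero (idx M)) = x \<and> (p n, q m) \<in> ZN \<and>
          ((q, m), (p, n)) \<in> Z2"
          apply (rule exI[of _ "\<lambda>i. fst (q i)"], rule exI[of _ m])
          using h P[of q] I2[of q m] by (auto simp: ZN intro: Z2I)
      qed
    qed
    show "\<forall>(x1, x2)\<in>ZN. \<forall>q m. is_path (two_copies M) q \<and> m \<in> ipts (idx M) \<and> q m = x2 \<and> m \<noteq> izero (idx M) \<longrightarrow>
        (\<exists>p n. is_path M p \<and> n \<in> ipts (idx M) \<and> p n = x1 \<and> (p (izero (idx M)), q (izero (idx M))) \<in> ZN \<and>
          ((q, m), (p, n)) \<in> Z2)"
    proof (rule ballI)
      fix z assume "z \<in> ZN"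
      then obtain x b where z: "z = (x, (x, b))" "x \<in> pts M" using zn by blast
      show "case z of (x1, x2) \<Rightarrow> \<forall>q m. is_path (two_copies M) q \<and> m \<in> ipts (idx M) \<and> q m = x2 \<and> m \<noteq> izero (idx M) \<longrightarrow>
        (\<exists>p n. is_path M p \<and> n \<in> ipts (idx M) \<and> p n = x1 \<and> (p (izero (idx M)), q (izero (idx M))) \<in> ZN \<and>
          ((q, m), (p, n)) \<in> Z2)"
        unfolding z(1) prod.case
      proof (intro allI impI)
        fix q m assume h: "is_path (two_copies M) q \<and> m \<in> ipts (idx M) \<and> q m = (x, b) \<and> m \<noteq> izero (idx M)"
        show "\<exists>p n. is_path M p \<and> n \<in> ipts (idx M) \<and> p n = x \<and> (p (izero (idx M)), q (izero (idx M))) \<in> ZN \<and>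
          ((q, m), (p, n)) \<in> Z2"
          apply (rule exI[of _ "\<lambda>i. fst (q i)"], rule exI[of _ m])
          using h P[of q] I2[of q "izero (idx M)"] z0 by (auto simp: ZN intro: Z2I)
      qed
    qed
    show "\<forall>((q, m), (p, n))\<in>Z2. \<forall>kp\<in>ipts (idx M). ilt (idx M) (izero (idx M)) kp \<and> ilt (idx M) kp n \<longrightarrow>
        (\<exists>kq\<in>ipts (idx M). ilt (idx M) (izero (idx M)) kq \<and> ilt (idx M) kq m \<and> (p kp, q kq) \<in> ZN)"
    proof -
      have key: "\<And>q k. is_path (two_copies M) q \<Longrightarrow> k \<in> ipts (idx M) \<Longrightarrow> (fst (q k), q k) \<in> ZN"
        using I2 ZN by auto
      show ?thesis unfolding Z2_def using key by auto
    qed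
qed simp
  then show ?thesis by (simp only: ZN_def Z1_def Z2_def)
qed

section \<open>Non-definability of connectedness\<close>

definition idx0 :: "'i ispace" where
  "idx0 = \<lparr>ipts = {undefined}, inbhd = (\<lambda>_. {{undefined}}), ile = (\<lambda>_ _. True), izero = undefined\<rparr>"

definition dmodel :: "'a set \<Rightarrow> ('a, 'i, 'p) nmodel" where
  "dmodel X = \<lparr>pts = X, nbhd = (\<lambda>x. {A. x \<in> A \<and> A \<subseteq> X}), idx = idx0, val = (\<lambda>_. {})\<rparr>"

lemma idx0_simps[simp]: "ipts idx0 = {undefined}" "inbhd idx0 = (\<lambda>_. {{undefined}})"
  "ile idx0 = (\<lambda>_ _. True)" "izero idx0 = undefined"
  by (simp_all add: idx0_def)

lemma dmodel_simps[simp]: "pts (dmodel X) = X" "nbhd (dmodel X) = (\<lambda>x. {A. x \<in> A \<and> A \<subseteq> X})"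
  "idx (dmodel X) = idx0" "val (dmodel X) = (\<lambda>_. {})"
  by (simp_all add: dmodel_def)

lemma nspace_disc: "nspace X (\<lambda>x. {A. x \<in> A \<and> A \<subseteq> X})"
  unfolding nspace_def by auto

lemma nspace_idx0: "nspace {u} (\<lambda>_. {{u}})"
  unfolding nspace_def by auto

lemma closure_incl: assumes "nspace X N" "U \<subseteq> X" shows "U \<subseteq> nclosure X N U"
proof
  fix x assume x: "x \<in> U"
  then have xX: "x \<in> X" using assms(2) by blast
  have "\<forall>M\<in>N x. U \<inter> M \<noteq> {}"
  proof
    fix M assume "M \<in> N x"
    then have "x \<in> M" using nspace_sub(2)[OF assms(1) xX] by blast
    then show "U \<inter> M \<noteq> {}" using x by blast
  qed
  then show "x \<in> nclosure X N U" unfolding nclosure_def using xX by blast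
qed

lemma conn_single: assumes "nspace {u} N" shows "nconnected {u} N"
  unfolding nconnected_def nconnected_set_def semi_separated_def
proof (rule notI, elim exE conjE)
  fix U V assume h: "U \<noteq> {}" "V \<noteq> {}" "U \<union> V = {u}" "nclosure {u} N U \<inter> V = {}"
  have sU: "U \<subseteq> {u}" and sV: "V \<subseteq> {u}" using h(3) by blast+
  have uU: "u \<in> U" using sU h(1) by blast
  have uV: "u \<in> V" using sV h(2) by blast
  have "U \<subseteq> nclosure {u} N U" using closure_incl[OF assms sU] .
  then have "u \<in> nclosure {u} N U \<inter> V" using uU uV by blast
  then show False using h(4) by simp
qed

lemma index_space_idx0: "index_space idx0"
  unfolding index_space_def by (simp add: nspace_idx0 conn_single[OF nspace_idx0])

lemma nmodel_d: "nmodel (dmodel X)"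
  unfolding nmodel_def by (simp add: nspace_disc index_space_idx0)

lemma closure_disc: "nclosure X (\<lambda>x. {A. x \<in> A \<and> A \<subseteq> X}) S = S \<inter> X"
proof
  show "nclosure X (\<lambda>x. {A. x \<in> A \<and> A \<subseteq> X}) S \<subseteq> S \<inter> X"
  proof
    fix x assume h: "x \<in> nclosure X (\<lambda>x. {A. x \<in> A \<and> A \<subseteq> X}) S"
    then have x: "x \<in> X" and all: "\<forall>M\<in>{A. x \<in> A \<and> A \<subseteq> X}. S \<inter> M \<noteq> {}"
      unfolding nclosure_def by blast+
    have "{x} \<in> {A. x \<in> A \<and> A \<subseteq> X}" using x by blast
    then have "S \<inter> {x} \<noteq> {}" using all by blast
    then show "x \<in> S \<inter> X" using x by blast
  qed
  show "S \<inter> X \<subseteq> nclosure X (\<lambda>x. {A. x \<in> A \<and> A \<subseteq> X}) S"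
    unfolding nclosure_def by blast
qed

primrec fval :: "'p slcs \<Rightarrow> bool" where
  "fval (Atom a) = False"
| "fval Top = True"
| "fval (Neg \<phi>) = (\<not> fval \<phi>)"
| "fval (Conj \<phi> \<psi>) = (fval \<phi> \<and> fval \<psi>)"
| "fval (Near \<phi>) = fval \<phi>"
| "fval (Reach \<phi> \<psi>) = fval \<psi>"
| "fval (Pass \<phi> \<psi>) = fval \<psi>"

lemma const_path: "x \<in> X \<Longrightarrow> is_path (dmodel X :: ('a, 'i, 'p) nmodel) (\<lambda>_. x)"
  unfolding is_path_def ncontinuous_def by auto

lemma sat_d: "x \<in> X \<Longrightarrow> sat (dmodel X :: ('a, 'i, 'p) nmodel) x \<phi> = fval \<phi>"
proof (induction \<phi> arbitrary: x)
  case (Near \<phi>)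
  have "{y \<in> X. sat (dmodel X :: ('a, 'i, 'p) nmodel) y \<phi>} = {y \<in> X. fval \<phi>}" using Near.IH by blast
  then show ?case using Near.prems by (simp add: closure_disc)
next
  case (Reach \<phi> \<psi>)
  let ?M = "dmodel X :: ('a, 'i, 'p) nmodel"
  show ?case
  proof
    assume "sat ?M x (Reach \<phi> \<psi>)"
    then obtain p where p: "is_path ?M p" "p undefined = x" "sat ?M (p undefined) \<psi>" by auto
    then show "fval (Reach \<phi> \<psi>)" using Reach.IH(2)[OF Reach.prems] by simp
  next
    assume "fval (Reach \<phi> \<psi>)"
    then have "sat ?M x \<psi>" using Reach.IH(2)[OF Reach.prems] by simp
    then show "sat ?M x (Reach \<phi> \<psi>)" using const_path[OF Reach.prems]
      by (auto simp: ilt_def intro!: exI[of _ "\<lambda>_. x"])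
  qed
next
  case (Pass \<phi> \<psi>)
  let ?M = "dmodel X :: ('a, 'i, 'p) nmodel"
  show ?case
  proof
    assume "sat ?M x (Pass \<phi> \<psi>)"
    then obtain p where p: "is_path ?M p" "p undefined = x" "sat ?M (p undefined) \<psi>" by auto
    then show "fval (Pass \<phi> \<psi>)" using Pass.IH(2)[OF Pass.prems] by simp
  next
    assume "fval (Pass \<phi> \<psi>)"
    then have "sat ?M x \<psi>" using Pass.IH(2)[OF Pass.prems] by simp
    then show "sat ?M x (Pass \<phi> \<psi>)" using const_path[OF Pass.prems]
      by (auto simp: ilt_def intro!: exI[of _ "\<lambda>_. x"])
  qed
qed auto

lemma conn_a: "nconnected {a} (\<lambda>x. {A. x \<in> A \<and> A \<subseteq> {a}})"
  by (rule conn_single[OF nspace_disc])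

lemma disconn_ab: assumes "a \<noteq> b" shows "\<not> nconnected {a, b} (\<lambda>x. {A. x \<in> A \<and> A \<subseteq> {a, b}})"
proof -
  have "\<exists>U V. U \<noteq> {} \<and> V \<noteq> {} \<and> U \<union> V = {a, b} \<and> U \<inter> {a, b} \<inter> V = {} \<and> U \<inter> (V \<inter> {a, b}) = {}"
    by (rule exI[of _ "{a}"], rule exI[of _ "{b}"]) (use assms in auto)
  then show ?thesis
    unfolding nconnected_def nconnected_set_def semi_separated_def closure_disc by simp
qed


theorem proposition21:
  fixes dummy :: "'a itself" and dummy_i :: "'i itself" and dummy_p :: "'p::countable itself"
  assumes "\<exists>a b :: 'a. a \<noteq> b"
  shows "\<not> (\<exists>\<phi> :: 'p slcs. \<forall>M :: ('a, 'i, 'p) nmodel.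
            nmodel M \<longrightarrow> (nconnected (pts M) (nbhd M) \<longleftrightarrow> (\<forall>x\<in>pts M. sat M x \<phi>)))
       \<and> (\<forall>M :: ('a, 'i, 'p) nmodel. nmodel M \<and> pts M \<noteq> {} \<longrightarrow>
            nmodel (two_copies M) \<and>
            (\<exists>Z1 Z2. pp_bisim M (two_copies M) {(x, (x, b)) | x b. x \<in> pts M} Z1 Z2))"
proof (rule conjI)
  show "\<not> (\<exists>\<phi> :: 'p slcs. \<forall>M :: ('a, 'i, 'p) nmodel.
            nmodel M \<longrightarrow> (nconnected (pts M) (nbhd M) \<longleftrightarrow> (\<forall>x\<in>pts M. sat M x \<phi>)))"
  proof
    assume "\<exists>\<phi> :: 'p slcs. \<forall>M :: ('a, 'i, 'p) nmodel.
            nmodel M \<longrightarrow> (nconnected (pts M) (nbhd M) \<longleftrightarrow> (\<forall>x\<in>pts M. sat M x \<phi>))"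
    then obtain \<phi> :: "'p slcs" where H: "\<And>M :: ('a, 'i, 'p) nmodel.
            nmodel M \<Longrightarrow> (nconnected (pts M) (nbhd M) \<longleftrightarrow> (\<forall>x\<in>pts M. sat M x \<phi>))" by blast
    obtain a b :: 'a where ab: "a \<noteq> b" using assms by blast
    have 1: "nconnected {a} (\<lambda>x. {A. x \<in> A \<and> A \<subseteq> {a}}) \<longleftrightarrow>
        (\<forall>x\<in>{a}. sat (dmodel {a} :: ('a, 'i, 'p) nmodel) x \<phi>)"
      using H[OF nmodel_d, of "{a}"] by simp
    have 2: "nconnected {a, b} (\<lambda>x. {A. x \<in> A \<and> A \<subseteq> {a, b}}) \<longleftrightarrow>
        (\<forall>x\<in>{a, b}. sat (dmodel {a, b} :: ('a, 'i, 'p) nmodel) x \<phi>)"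
      using H[OF nmodel_d, of "{a, b}"] by simp
    have s1: "sat (dmodel {a} :: ('a, 'i, 'p) nmodel) a \<phi> = fval \<phi>" by (rule sat_d) simp
    have s2: "\<forall>x\<in>{a, b}. sat (dmodel {a, b} :: ('a, 'i, 'p) nmodel) x \<phi> = fval \<phi>"
      by (intro ballI sat_d)
    have "fval \<phi>" using 1 conn_a[of a] s1 by simp
    moreover have "\<not> fval \<phi>" using 2 disconn_ab[OF ab] s2 by simp
    ultimately show False by blast
  qed
next
  show "\<forall>M :: ('a, 'i, 'p) nmodel. nmodel M \<and> pts M \<noteq> {} \<longrightarrow>
            nmodel (two_copies M) \<and>
            (\<exists>Z1 Z2. pp_bisim M (two_copies M) {(x, (x, b)) | x b. x \<in> pts M} Z1 Z2)"
    using nmodel_two bisim_two by blast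
qed

end
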